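(* Let $\star$ be a star operation on an integral domain $R$. If every nonzero finitely generated ideal of $R$ is $\star$-basic (the finite $\star$-basic ideal property), then $R$ is integrally closed.
   Context: A star operation on a domain $R$ with quotient field $K$ is a map $I\mapsto I^\star$ on nonzero fractional ideals with $(aI)^\star=aI^\star$ ($0\ne a\in K$), $R^\star=R$, $I\subseteq I^\star$, $I\subseteq J\Rightarrow I^\star\subseteq J^\star$, $I^{\star\star}=I^\star$. For a nonzero ideal $I$, an ideal $J\subseteq I$ is a $\star$-reduction of $I$ if $(JI^n)^\star=(I^{n+1})^\star$ for some integer $n\ge0$; $I$ is $\star$-basic if every $\star$-reduction $J$ of $I$ satisfies $J^\star=I^\star$. *)

theory Defs
  imports "HOL-Computational_Algebra.Polynomial"
begin

text \<open>The domain R is represented as a subring of a field K (type 'k) such that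
  K is the quotient field of R. Fractional ideals are subsets of K.\<close>

definition is_subring :: "'k::field set \<Rightarrow> bool" where
  "is_subring R \<longleftrightarrow> 0 \<in> R \<and> 1 \<in> R \<and>
     (\<forall>a\<in>R. \<forall>b\<in>R. a + b \<in> R \<and> a - b \<in> R \<and> a * b \<in> R)"

definition quotient_field_of :: "'k::field set \<Rightarrow> bool" where
  "quotient_field_of R \<longleftrightarrow> (\<forall>x. \<exists>a\<in>R. \<exists>b\<in>R. b \<noteq> 0 \<and> x = a / b)"

definition submod :: "'k::field set \<Rightarrow> 'k set \<Rightarrow> bool" where
  "submod R M \<longleftrightarrow> 0 \<in> M \<and> (\<forall>x\<in>M. \<forall>y\<in>M. x + y \<in> M) \<and> (\<forall>r\<in>R. \<forall>x\<in>M. r * x \<in> M)"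

definition rspan :: "'k::field set \<Rightarrow> 'k set \<Rightarrow> 'k set" where
  "rspan R S = \<Inter>{M. submod R M \<and> S \<subseteq> M}"

definition frac_ideal :: "'k::field set \<Rightarrow> 'k set \<Rightarrow> bool" where
  "frac_ideal R I \<longleftrightarrow> submod R I \<and> I \<noteq> {0} \<and>
     (\<exists>d\<in>R. d \<noteq> 0 \<and> (\<lambda>x. d * x) ` I \<subseteq> R)"

definition imul :: "'k::field set \<Rightarrow> 'k set \<Rightarrow> 'k set \<Rightarrow> 'k set" where
  "imul R I J = rspan R {a * b | a b. a \<in> I \<and> b \<in> J}"

primrec ipow :: "'k::field set \<Rightarrow> 'k set \<Rightarrow> nat \<Rightarrow> 'k set" where
  "ipow R I 0 = R"
| "ipow R I (Suc n) = imul R I (ipow R I n)"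

definition star_operation :: "'k::field set \<Rightarrow> ('k set \<Rightarrow> 'k set) \<Rightarrow> bool" where
  "star_operation R st \<longleftrightarrow>
     (\<forall>I. frac_ideal R I \<longrightarrow> frac_ideal R (st I)) \<and>
     (\<forall>I a. frac_ideal R I \<longrightarrow> a \<noteq> 0 \<longrightarrow> st ((\<lambda>x. a * x) ` I) = (\<lambda>x. a * x) ` st I) \<and>
     st R = R \<and>
     (\<forall>I. frac_ideal R I \<longrightarrow> I \<subseteq> st I) \<and>
     (\<forall>I J. frac_ideal R I \<longrightarrow> frac_ideal R J \<longrightarrow> I \<subseteq> J \<longrightarrow> st I \<subseteq> st J) \<and>
     (\<forall>I. frac_ideal R I \<longrightarrow> st (st I) = st I)"

definition is_ideal :: "'k::field set \<Rightarrow> 'k set \<Rightarrow> bool" where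
  "is_ideal R I \<longleftrightarrow> submod R I \<and> I \<subseteq> R"

definition fg_nonzero_ideal :: "'k::field set \<Rightarrow> 'k set \<Rightarrow> bool" where
  "fg_nonzero_ideal R I \<longleftrightarrow> I \<noteq> {0} \<and> (\<exists>S. finite S \<and> S \<subseteq> R \<and> I = rspan R S)"

definition star_reduction :: "'k::field set \<Rightarrow> ('k set \<Rightarrow> 'k set) \<Rightarrow> 'k set \<Rightarrow> 'k set \<Rightarrow> bool" where
  "star_reduction R st J I \<longleftrightarrow> is_ideal R J \<and> J \<noteq> {0} \<and> J \<subseteq> I \<and>
     (\<exists>n. st (imul R J (ipow R I n)) = st (ipow R I (Suc n)))"

definition star_basic :: "'k::field set \<Rightarrow> ('k set \<Rightarrow> 'k set) \<Rightarrow> 'k set \<Rightarrow> bool" where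
  "star_basic R st I \<longleftrightarrow> (\<forall>J. star_reduction R st J I \<longrightarrow> st J = st I)"

definition integrally_closed :: "'k::field set \<Rightarrow> bool" where
  "integrally_closed R \<longleftrightarrow>
     (\<forall>x. (\<exists>p. lead_coeff p = 1 \<and> (\<forall>i. coeff p i \<in> R) \<and> poly p x = 0) \<longrightarrow> x \<in> R)"

end

theory Submission
  imports Defs
begin

lemma rspan_least: "submod R M \<Longrightarrow> S \<subseteq> M \<Longrightarrow> rspan R S \<subseteq> M"
  unfolding rspan_def by blast

lemma rspan_sup: "S \<subseteq> rspan R S"
  unfolding rspan_def by blast

lemma submod_rspan: "submod R (rspan R S)"
  unfolding rspan_def submod_def by auto

lemma submod_scale: assumes "submod R M" shows "submod R ((*) c ` M)"
  unfolding submod_def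
proof (intro conjI ballI)
  show "0 \<in> (*) c ` M" using assms unfolding submod_def by force
next
  fix u v assume "u \<in> (*) c ` M" "v \<in> (*) c ` M"
  then obtain s t where st: "s \<in> M" "t \<in> M" "u = c * s" "v = c * t" by blast
  then have "s + t \<in> M" using assms unfolding submod_def by blast
  moreover have "u + v = c * (s + t)" using st by (simp add: distrib_left)
  ultimately show "u + v \<in> (*) c ` M" by blast
next
  fix r u assume r: "r \<in> R" and "u \<in> (*) c ` M"
  then obtain s where st: "s \<in> M" "u = c * s" by blast
  then have "r * s \<in> M" using assms r unfolding submod_def by blast
  moreover have "r * u = c * (r * s)" using st by (simp add: mult.left_commute)
  ultimately show "r * u \<in> (*) c ` M" by blast
qed

lemma submod_pre: assumes "submod R M" shows "submod R {y. c * y \<in> M}"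
  unfolding submod_def
proof (intro conjI ballI)
  show "0 \<in> {y. c * y \<in> M}" using assms unfolding submod_def by simp
next
  fix u v assume "u \<in> {y. c * y \<in> M}" "v \<in> {y. c * y \<in> M}"
  then have "c * u + c * v \<in> M" using assms unfolding submod_def by blast
  then show "u + v \<in> {y. c * y \<in> M}" by (simp add: distrib_left)
next
  fix r u assume r: "r \<in> R" and "u \<in> {y. c * y \<in> M}"
  then have "r * (c * u) \<in> M" using assms unfolding submod_def by blast
  then show "r * u \<in> {y. c * y \<in> M}" by (simp add: mult.left_commute)
qed

lemma submod_sum:
  assumes "submod R M" "finite F" "\<forall>i\<in>F. f i \<in> M" shows "sum f F \<in> M"
  using assms(2,3) by (induction F rule: finite_induct) (use assms(1) in \<open>auto simp: submod_def\<close>)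

lemma submod_R: "is_subring R \<Longrightarrow> submod R R"
  unfolding submod_def is_subring_def by auto

lemma rspan_scale: "rspan R ((*) d ` T) = (*) d ` rspan R T"
proof
  show "rspan R ((*) d ` T) \<subseteq> (*) d ` rspan R T"
    by (rule rspan_least[OF submod_scale[OF submod_rspan]]) (use rspan_sup in blast)
  have "rspan R T \<subseteq> {y. d * y \<in> rspan R ((*) d ` T)}"
    by (rule rspan_least[OF submod_pre[OF submod_rspan]]) (use rspan_sup in blast)
  then show "(*) d ` rspan R T \<subseteq> rspan R ((*) d ` T)" by blast
qed

lemma imul_eq:
  assumes "submod R B" "\<forall>u\<in>U. \<forall>v\<in>V. u * v \<in> B"
    "\<forall>w\<in>B. \<exists>u\<in>U. \<exists>v\<in>V. w = u * v"
  shows "imul R U V = B"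
  unfolding imul_def
proof
  show "rspan R {a * b |a b. a \<in> U \<and> b \<in> V} \<subseteq> B"
  proof (rule rspan_least[OF assms(1)])
    show "{a * b |a b. a \<in> U \<and> b \<in> V} \<subseteq> B"
    proof
      fix w assume "w \<in> {a * b |a b. a \<in> U \<and> b \<in> V}"
      then obtain u v where "u \<in> U" "v \<in> V" "w = u * v" by blast
      then show "w \<in> B" using assms(2) by blast
    qed
  qed
  show "B \<subseteq> rspan R {a * b |a b. a \<in> U \<and> b \<in> V}"
  proof
    fix w assume "w \<in> B"
    then obtain u v where "u \<in> U" "v \<in> V" "w = u * v" using assms(3) by blast
    then have "w \<in> {a * b |a b. a \<in> U \<and> b \<in> V}" by blast
    then show "w \<in> rspan R {a * b |a b. a \<in> U \<and> b \<in> V}" by (rule subsetD[OF rspan_sup])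
  qed
qed

theorem lemma1p3:
  fixes R :: "'k::field set" and st :: "'k set \<Rightarrow> 'k set"
  assumes "is_subring R"
    and "quotient_field_of R"
    and "star_operation R st"
    and "\<forall>I. is_ideal R I \<and> fg_nonzero_ideal R I \<longrightarrow> star_basic R st I"
  shows "integrally_closed R"
  unfolding integrally_closed_def
proof (intro allI impI)
  fix x :: 'k
  assume "\<exists>p. lead_coeff p = 1 \<and> (\<forall>i. coeff p i \<in> R) \<and> poly p x = 0"
  then obtain p where lc: "lead_coeff p = 1" and cR: "\<forall>i. coeff p i \<in> R" and px: "poly p x = 0"
    by blast
  have sub: "is_subring R" by fact
  have RR: "submod R R" using submod_R[OF sub] .
  have R01: "0 \<in> R" "1 \<in> R" using sub unfolding is_subring_def by auto
  have Rmul: "\<And>u v. u \<in> R \<Longrightarrow> v \<in> R \<Longrightarrow> u * v \<in> R"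
    using sub unfolding is_subring_def by auto
  have Rm1: "-1 \<in> R" using sub R01 unfolding is_subring_def by (metis diff_0)
  define n where "n = degree p"
  have n0: "n \<noteq> 0"
  proof
    assume "n = 0"
    then have dp: "degree p = 0" using n_def by simp
    then have "poly p x = coeff p 0" by (simp add: poly_altdef)
    moreover have "coeff p 0 = 1" using lc dp by simp
    ultimately show False using px by simp
  qed
  define A where "A = rspan R ((\<lambda>i. x ^ i) ` {..<n})"
  have A: "submod R A" unfolding A_def by (rule submod_rspan)
  have Aind: "\<And>M. submod R M \<Longrightarrow> (\<lambda>i. x ^ i) ` {..<n} \<subseteq> M \<Longrightarrow> A \<subseteq> M"
    unfolding A_def by (rule rspan_least)
  have xiA: "\<And>i. i < n \<Longrightarrow> x ^ i \<in> A"
  proof -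
    fix i :: nat assume "i < n"
    then have "x ^ i \<in> (\<lambda>i. x ^ i) ` {..<n}" by simp
    then show "x ^ i \<in> A" unfolding A_def using rspan_sup by (rule subsetD[rotated])
  qed
  have A1: "1 \<in> A" using xiA[of 0] n0 by simp
  have Asc: "\<And>r u. r \<in> R \<Longrightarrow> u \<in> A \<Longrightarrow> r * u \<in> A" using A[unfolded submod_def] by meson
  have xnA: "x ^ n \<in> A"
  proof -
    have "0 = (\<Sum>i\<le>n. coeff p i * x ^ i)" using px unfolding poly_altdef n_def by simp
    also have "\<dots> = (\<Sum>i<n. coeff p i * x ^ i) + x ^ n"
      using lc unfolding n_def by (simp add: lessThan_Suc_atMost[symmetric])
    finally have "x ^ n + (\<Sum>i<n. coeff p i * x ^ i) = 0" by (simp add: algebra_simps)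
    then have "x ^ n = (-1) * (\<Sum>i<n. coeff p i * x ^ i)" by (metis eq_neg_iff_add_eq_0 mult_minus1)
    moreover have "(\<Sum>i<n. coeff p i * x ^ i) \<in> A"
      by (rule submod_sum[OF A]) (simp_all add: Asc cR xiA)
    ultimately show ?thesis using Asc[OF Rm1] by (metis mult_minus1)
  qed
  have xA: "A \<subseteq> {y. x * y \<in> A}"
  proof (rule Aind[OF submod_pre[OF A]])
    show "(\<lambda>i. x ^ i) ` {..<n} \<subseteq> {y. x * y \<in> A}"
    proof
      fix y assume "y \<in> (\<lambda>i. x ^ i) ` {..<n}"
      then obtain i where i: "i < n" "y = x ^ i" by auto
      show "y \<in> {y. x * y \<in> A}"
      proof (cases "Suc i < n")
        case True then show ?thesis using xiA i by (simp del: power_Suc add: power_Suc[symmetric])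
      next
        case False then have "Suc i = n" using i by simp
        then show ?thesis using xnA i by (simp del: power_Suc add: power_Suc[symmetric])
      qed
    qed
  qed
  have xjA: "\<And>j u. u \<in> A \<Longrightarrow> x ^ j * u \<in> A"
  proof -
    fix j u assume "u \<in> A" then show "x ^ j * u \<in> A"
      by (induction j) (use xA in \<open>auto simp: mult.assoc\<close>)
  qed
  have AA: "\<And>u v. u \<in> A \<Longrightarrow> v \<in> A \<Longrightarrow> u * v \<in> A"
  proof -
    fix u v assume u: "u \<in> A" and v: "v \<in> A"
    have "A \<subseteq> {y. u * y \<in> A}"
      by (rule Aind[OF submod_pre[OF A]]) (use xjA u in \<open>auto simp: mult.commute\<close>)
    then show "u * v \<in> A" using v by blast
  qed
  have xA': "x \<in> A" using xA A1 by auto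
  obtain a b where ab: "a \<in> R" "b \<in> R" "b \<noteq> 0" "x = a / b"
    using assms(2) unfolding quotient_field_of_def by blast
  define d where "d = b ^ (n - 1)"
  have d0: "d \<noteq> 0" unfolding d_def using ab by simp
  have powR: "\<And>k. a ^ k \<in> R" "\<And>k. b ^ k \<in> R"
    subgoal for k by (induction k) (use R01 Rmul ab in auto)
    subgoal for k by (induction k) (use R01 Rmul ab in auto)
    done
  have dR: "d \<in> R" unfolding d_def by (rule powR)
  have dA: "A \<subseteq> {y. d * y \<in> R}"
  proof (rule Aind[OF submod_pre[OF RR]])
    show "(\<lambda>i. x ^ i) ` {..<n} \<subseteq> {y. d * y \<in> R}"
    proof
      fix y assume "y \<in> (\<lambda>i. x ^ i) ` {..<n}"
      then obtain i where i: "i < n" "y = x ^ i" by auto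
      have "d * x ^ i = a ^ i * b ^ (n - 1 - i)"
      proof -
        have "d = b ^ (n - 1 - i) * b ^ i" unfolding d_def using i
          by (simp add: power_add[symmetric])
        then show ?thesis using ab by (simp add: power_divide)
      qed
      then show "y \<in> {y. d * y \<in> R}" using i powR Rmul by simp
    qed
  qed
  define I where "I = (*) d ` A"
  define J where "J = (*) d ` R"
  have Isub: "submod R I" unfolding I_def by (rule submod_scale[OF A])
  have IR: "I \<subseteq> R" unfolding I_def using dA by blast
  have dI: "d \<in> I" unfolding I_def using A1 by force
  have Inz: "I \<noteq> {0}" using dI d0 by blast
  have Iid: "is_ideal R I" using Isub IR unfolding is_ideal_def by simp
  have Ifg: "fg_nonzero_ideal R I"
    unfolding fg_nonzero_ideal_def
  proof (intro conjI exI)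
    show "I \<noteq> {0}" by fact
    show "finite ((*) d ` (\<lambda>i. x ^ i) ` {..<n})" by simp
    show "(*) d ` (\<lambda>i. x ^ i) ` {..<n} \<subseteq> R" using dA xiA by auto
    show "I = rspan R ((*) d ` (\<lambda>i. x ^ i) ` {..<n})"
      unfolding I_def A_def rspan_scale ..
  qed
  have basic: "star_basic R st I" using assms(4)[rule_format, of I] Iid Ifg by simp
  have frR: "frac_ideal R R" unfolding frac_ideal_def
  proof (intro conjI bexI[of _ 1])
    show "R \<noteq> {0}" using R01 by (metis one_neq_zero singletonD)
  qed (use RR R01 in auto)
  have frI: "frac_ideal R I" unfolding frac_ideal_def
    by (intro conjI bexI[of _ 1]) (use Isub Inz IR R01 in auto)
  have st: "\<And>I a. frac_ideal R I \<Longrightarrow> a \<noteq> 0 \<Longrightarrow> st ((\<lambda>x. a * x) ` I) = (\<lambda>x. a * x) ` st I"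
    "st R = R" "\<And>I. frac_ideal R I \<Longrightarrow> I \<subseteq> st I"
    using assms(3)[unfolded star_operation_def] by meson+
  have stJ: "st J = J" unfolding J_def using st(1)[OF frR d0] st(2) by simp
  have JI: "J \<subseteq> I"
  proof
    fix u assume "u \<in> J"
    then obtain r where r: "r \<in> R" "u = d * r" unfolding J_def by blast
    then have "r * 1 \<in> A" using Asc A1 by blast
    then show "u \<in> I" unfolding I_def using r by auto
  qed
  have Jid: "is_ideal R J" unfolding is_ideal_def J_def
    using submod_scale[OF RR] dR Rmul by auto
  have "d * 1 \<in> J" unfolding J_def using R01 by blast
  then have Jnz: "J \<noteq> {0}" using d0 by auto
  have IR1: "imul R I R = I"
  proof (rule imul_eq[OF Isub])
    show "\<forall>u\<in>I. \<forall>v\<in>R. u * v \<in> I" using Isub unfolding submod_def by (metis mult.commute)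
    show "\<forall>w\<in>I. \<exists>u\<in>I. \<exists>v\<in>R. w = u * v" using R01 by (metis mult_1_right)
  qed
  have B: "submod R ((*) (d*d) ` A)" by (rule submod_scale[OF A])
  have II: "imul R I I = (*) (d*d) ` A"
  proof (rule imul_eq[OF B])
    show "\<forall>u\<in>I. \<forall>v\<in>I. u * v \<in> (*) (d * d) ` A"
    proof (intro ballI)
      fix u v assume "u \<in> I" "v \<in> I"
      then obtain s t where "s \<in> A" "t \<in> A" "u = d * s" "v = d * t" unfolding I_def by blast
      then show "u * v \<in> (*) (d * d) ` A" using AA[of s t] by (intro image_eqI[of _ _ "s*t"]) (auto simp: algebra_simps)
    qed
    show "\<forall>w\<in>(*) (d * d) ` A. \<exists>u\<in>I. \<exists>v\<in>I. w = u * v"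
    proof
      fix w assume "w \<in> (*) (d * d) ` A"
      then obtain t where t: "t \<in> A" "w = d * d * t" by blast
      have "d * 1 \<in> I" "d * t \<in> I" unfolding I_def using A1 t by blast+
      then show "\<exists>u\<in>I. \<exists>v\<in>I. w = u * v" using t by (metis mult.assoc mult_1_right)
    qed
  qed
  have JI2: "imul R J I = (*) (d*d) ` A"
  proof (rule imul_eq[OF B])
    show "\<forall>u\<in>J. \<forall>v\<in>I. u * v \<in> (*) (d * d) ` A"
    proof (intro ballI)
      fix u v assume "u \<in> J" "v \<in> I"
      then obtain s t where "s \<in> R" "t \<in> A" "u = d * s" "v = d * t" unfolding I_def J_def by blast
      then show "u * v \<in> (*) (d * d) ` A" using Asc[of s t] by (intro image_eqI[of _ _ "s*t"]) (auto simp: algebra_simps)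
    qed
    show "\<forall>w\<in>(*) (d * d) ` A. \<exists>u\<in>J. \<exists>v\<in>I. w = u * v"
    proof
      fix w assume "w \<in> (*) (d * d) ` A"
      then obtain t where t: "t \<in> A" "w = d * d * t" by blast
      have "d * 1 \<in> J" "d * t \<in> I" unfolding I_def J_def using R01 t by blast+
      then show "\<exists>u\<in>J. \<exists>v\<in>I. w = u * v" using t by (metis mult.assoc mult_1_right)
    qed
  qed
  have red: "star_reduction R st J I"
    unfolding star_reduction_def
  proof (intro conjI exI)
    show "st (imul R J (ipow R I 1)) = st (ipow R I (Suc 1))"
      using IR1 II JI2 by simp
  qed (use Jid Jnz JI in auto)
  have "st J = st I" using basic red unfolding star_basic_def by blast
  then have "I \<subseteq> J" using st(3)[OF frI] stJ by simp
  moreover have "d * x \<in> I" unfolding I_def using xA' by (rule imageI)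
  ultimately have "d * x \<in> (*) d ` R" unfolding J_def by (rule subsetD)
  then obtain r where r: "r \<in> R" "d * x = d * r" by (rule imageE) simp
  then have "x = r" using d0 by simp
  then show "x \<in> R" using r by simp
qed

end
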